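(* Let $\theta:\mathbb{R}^n\to[-\infty,\infty]$ be a symmetric function and let $X\in\mathbf{S}^n$ with $(\theta\circ\lambda)(X)$ finite. Assume either (i) $\theta$ is lower semicontinuous and convex with $\partial\theta(\lambda(X))\neq\emptyset$, or (ii) $\theta$ is locally Lipschitz continuous around $\lambda(X)$ relative to its domain. Then for all $H\in\mathbf{S}^n$, $$\mathrm{d}(\theta\circ\lambda)(X)(H)=\mathrm{d}\theta(\lambda(X))\big(\lambda'(X;H)\big).$$
   Context: $\mathbf{S}^n$: real symmetric $n\times n$ matrices with trace inner product. $\lambda(X)$: eigenvalue vector in nonincreasing order. $\theta$ symmetric: $\theta(Px)=\theta(x)$ for all permutation matrices $P$. $\partial\theta$ is the convex-analysis subdifferential. Local Lipschitz continuity around $\bar x$ relative to the domain: $\theta(\bar x)$ finite and $|\theta(x)-\theta(y)|\le\ell\|x-y\|$ for all $x,y\in V\cap\mathrm{dom}\,\theta$, $V$ a neighborhood of $\bar x$. Subderivative: $\mathrm{d}f(\bar x)(\bar w)=\liminf_{t\downarrow0,\,w\to\bar w}\frac{f(\bar x+tw)-f(\bar x)}{t}$. If $\mu_1>\dots>\mu_r$ are the distinct eigenvalues of $X$, $\alpha_m=\{i:\lambda_i(X)=\mu_m\}$, $U$ is orthogonal with $X=U\mathrm{Diag}(\lambda(X))U^\top$, and $U_{\alpha_m}$ is the submatrix of $U$ formed by the columns indexed by $\alpha_m$, then the directional derivative $\lambda'(X;H)=\lim_{t\downarrow0}(\lambda(X+tH)-\lambda(X))/t$ exists and equals $\big(\lambda(U_{\alpha_1}^\top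 HU_{\alpha_1}),\dots,\lambda(U_{\alpha_r}^\top HU_{\alpha_r})\big)$. *)

theory Defs
  imports "HOL-Analysis.Analysis"
begin

text \<open>Real symmetric n x n matrices; the index type 'n is a finite linearly ordered
  type (of cardinality n), so that "nonincreasing order" of eigenvalues makes sense.\<close>

definition sym_mats :: "(real^'n^'n) set" where
  "sym_mats = {X. transpose X = X}"

definition diag_mat :: "real^'n \<Rightarrow> real^'n^'n" where
  "diag_mat l = (\<chi> i j. if i = j then l $ i else 0)"

definition nonincr_vec :: "(real, 'n::{finite,linorder}) vec \<Rightarrow> bool" where
  "nonincr_vec l \<longleftrightarrow> (\<forall>i j. i \<le> j \<longrightarrow> l $ j \<le> l $ i)"

definition eigvals :: "((real, 'n::{finite,linorder}) vec, 'n) vec \<Rightarrow> (real, 'n) vec" where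
  "eigvals X = (THE l. nonincr_vec l \<and>
      (\<exists>U. orthogonal_matrix U \<and> X = U ** diag_mat l ** transpose U))"

definition eigvals_dir :: "((real, 'n::{finite,linorder}) vec, 'n) vec \<Rightarrow> ((real, 'n) vec, 'n) vec \<Rightarrow> (real, 'n) vec" where
  "eigvals_dir X H = Lim (at_right 0) (\<lambda>t. (1 / t) *\<^sub>R (eigvals (X + t *\<^sub>R H) - eigvals X))"

definition symmetric_fun :: "(real^'n \<Rightarrow> ereal) \<Rightarrow> bool" where
  "symmetric_fun \<theta> \<longleftrightarrow> (\<forall>p x. p permutes (UNIV::'n set) \<longrightarrow> \<theta> (\<chi> i. x $ p i) = \<theta> x)"

definition edom :: "('a \<Rightarrow> ereal) \<Rightarrow> 'a set" where
  "edom f = {x. f x < \<infinity>}"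

definition convex_efun :: "('a::real_vector \<Rightarrow> ereal) \<Rightarrow> bool" where
  "convex_efun f \<longleftrightarrow> convex {(x, r::real). f x \<le> ereal r}"

definition lsc_efun :: "('a::topological_space \<Rightarrow> ereal) \<Rightarrow> bool" where
  "lsc_efun f \<longleftrightarrow> (\<forall>x. f x \<le> Liminf (at x) f)"

definition subdiff :: "('a::real_inner \<Rightarrow> ereal) \<Rightarrow> 'a \<Rightarrow> 'a set" where
  "subdiff f x = {v. \<forall>y. f y \<ge> f x + ereal (v \<bullet> (y - x))}"

definition loc_lipschitz_rel_dom :: "('a::real_normed_vector \<Rightarrow> ereal) \<Rightarrow> 'a \<Rightarrow> bool" where
  "loc_lipschitz_rel_dom f xb \<longleftrightarrow> \<bar>f xb\<bar> \<noteq> \<infinity> \<and>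
     (\<exists>l V. open V \<and> xb \<in> V \<and>
        (\<forall>x\<in>V \<inter> edom f. \<forall>y\<in>V \<inter> edom f. \<bar>f x - f y\<bar> \<le> ereal (l * norm (x - y))))"

text \<open>Subderivative of f at x in direction w, for f defined on the set S
  (directions w' range over S, which is the ambient space: UNIV or S^n).\<close>
definition subderiv :: "('a::real_normed_vector \<Rightarrow> ereal) \<Rightarrow> 'a set \<Rightarrow> 'a \<Rightarrow> 'a \<Rightarrow> ereal" where
  "subderiv f S x w = Liminf (at_right (0::real) \<times>\<^sub>F inf (nhds w) (principal S))
      (\<lambda>(t, w'). (f (x + t *\<^sub>R w') - f x) / ereal t)"

end

theory Submission
  imports Defs
begin


lemma inner_matvec: "x \<bullet> (A *v y) = (transpose A *v x) \<bullet> (y::real^'n)"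
proof -
  have "x \<bullet> (A *v y) = (\<Sum>i\<in>UNIV. \<Sum>j\<in>UNIV. x$i * A$i$j * y$j)"
    unfolding inner_vec_def matrix_vector_mult_def by (simp add: sum_distrib_left mult.assoc)
  also have "\<dots> = (\<Sum>j\<in>UNIV. \<Sum>i\<in>UNIV. x$i * A$i$j * y$j)" by (rule sum.swap)
  also have "\<dots> = (transpose A *v x) \<bullet> y"
    unfolding inner_vec_def matrix_vector_mult_def transpose_def by (simp add: sum_distrib_right sum_distrib_left mult_ac)
  finally show ?thesis .
qed

lemma arith_aux: fixes m t p q z w :: real
  assumes h: "m + 2*t*q + t^2 * z \<le> m * (1 + 2 * t * p + t^2 * w)" and "q = w + m * p"
  shows "2 * t * w + t^2 * (z - m * w) \<le> 0"
  using assms by (simp add: algebra_simps)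

lemma sym_inner: "transpose A = A \<Longrightarrow> x \<bullet> (A *v y) = (A *v x) \<bullet> (y::real^'n)"
  by (metis inner_matvec)

lemma rayleigh_eig:
  fixes A :: "real^'n^'n"
  assumes symA: "transpose A = A" and sub: "subspace S" and inv: "\<forall>x\<in>S. A *v x \<in> S"
    and uS: "u \<in> S" and nu: "norm u = 1"
    and mx: "\<forall>x\<in>S. x \<bullet> (A *v x) \<le> (u \<bullet> (A *v u)) * (x \<bullet> x)"
  shows "A *v u = (u \<bullet> (A *v u)) *\<^sub>R u"
proof (rule ccontr)
  define \<mu> where "\<mu> = u \<bullet> (A *v u)"
  define r where "r = A *v u - \<mu> *\<^sub>R u"
  assume "A *v u \<noteq> (u \<bullet> (A *v u)) *\<^sub>R u"
  hence rnz: "r \<noteq> 0" unfolding r_def \<mu>_def by simp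
  have rS: "r \<in> S" unfolding r_def using sub inv uS
    by (simp add: subspace_diff subspace_scale)
  have uu: "u \<bullet> u = 1" using nu by (simp add: norm_eq_1)
  define K where "K = r \<bullet> (A *v r) - \<mu> * (r \<bullet> r)"
  have rr: "r \<bullet> r > 0" using rnz by simp
  have key: "2 * s * (r \<bullet> r) + s^2 * K \<le> 0" for s :: real
  proof -
    have "u + s *\<^sub>R r \<in> S" using sub uS rS by (simp add: subspace_add subspace_scale)
    hence h: "(u + s *\<^sub>R r) \<bullet> (A *v (u + s *\<^sub>R r)) \<le> \<mu> * ((u + s *\<^sub>R r) \<bullet> (u + s *\<^sub>R r))"
      using mx unfolding \<mu>_def by blast
    have e1: "(u + s *\<^sub>R r) \<bullet> (A *v (u + s *\<^sub>R r)) =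
       u \<bullet> (A *v u) + 2 * s * (r \<bullet> (A *v u)) + s^2 * (r \<bullet> (A *v r))"
    proof -
      have "u \<bullet> (A *v r) = r \<bullet> (A *v u)" using sym_inner[OF symA, of u r] by (simp add: inner_commute)
      thus ?thesis by (simp add: matrix_vector_right_distrib matrix_vector_mult_scaleR
            inner_add_left inner_add_right algebra_simps power2_eq_square)
    qed
    have e2: "(u + s *\<^sub>R r) \<bullet> (u + s *\<^sub>R r) = 1 + 2 * s * (u \<bullet> r) + s^2 * (r \<bullet> r)"
      using uu by (simp add: inner_add_left inner_add_right algebra_simps power2_eq_square inner_commute)
    have e3: "r \<bullet> (A *v u) = r \<bullet> r + \<mu> * (u \<bullet> r)"
      unfolding r_def by (simp add: inner_diff_left inner_diff_right inner_commute algebra_simps)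
    have "\<mu> + 2 * s * (r \<bullet> (A *v u)) + s^2 * (r \<bullet> (A *v r)) \<le> \<mu> * (1 + 2 * s * (u \<bullet> r) + s^2 * (r \<bullet> r))"
      using h e1 e2 unfolding \<mu>_def by simp
    from arith_aux[OF this e3] show ?thesis unfolding K_def .
  qed
  define s where "s = (r \<bullet> r) / (\<bar>K\<bar> + 1)"
  have s0: "s > 0" unfolding s_def using rr by (simp add: add_pos_nonneg)
  have "s * \<bar>K\<bar> \<le> r \<bullet> r"
  proof -
    have "s * (\<bar>K\<bar> + 1) = r \<bullet> r" unfolding s_def by simp
    thus ?thesis using s0 by (simp add: algebra_simps)
  qed
  hence "s^2 * \<bar>K\<bar> \<le> s * (r \<bullet> r)" using s0 by (simp add: power2_eq_square mult.assoc mult_left_mono)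
  moreover have "- (s^2 * \<bar>K\<bar>) \<le> s^2 * K"
    using mult_left_mono[OF abs_ge_minus_self[of K], of "s^2"] by simp
  moreover have "s * (r \<bullet> r) > 0" using s0 rr by simp
  ultimately have "2 * s * (r \<bullet> r) + s^2 * K > 0" by linarith
  with key[of s] show False by simp
qed



lemma max_rayleigh:
  fixes A :: "real^'n^'n"
  assumes cS: "closed S" and sS: "subspace S" and nz: "S \<noteq> {0}"
  shows "\<exists>u\<in>S. norm u = 1 \<and> (\<forall>x\<in>S. x \<bullet> (A *v x) \<le> (u \<bullet> (A *v u)) * (x \<bullet> x))"
proof -
  let ?K = "S \<inter> sphere 0 1"
  let ?f = "\<lambda>x. x \<bullet> (A *v x)"
  have cK: "compact ?K" using cS by (simp add: closed_Int_compact)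
  obtain x where x: "x \<in> S" "x \<noteq> 0" using nz subspace_0[OF sS] by blast
  have "x /\<^sub>R norm x \<in> ?K" using x sS by (simp add: subspace_scale)
  hence neK: "?K \<noteq> {}" by blast
  have "continuous_on ?K ?f"
    by (intro continuous_intros matrix_vector_mult_linear_continuous_on[THEN continuous_on_compose2[where g="(*v) A" and f="\<lambda>x. x"]]) auto
  then obtain u where u: "u \<in> ?K" "\<forall>y\<in>?K. ?f y \<le> ?f u"
    using continuous_attains_sup[OF cK neK] by blast
  show ?thesis
  proof (intro bexI conjI ballI)
    show "u \<in> S" "norm u = 1" using u by auto
    fix y assume yS: "y \<in> S"
    show "?f y \<le> ?f u * (y \<bullet> y)"
    proof (cases "y = 0")
      case True thus ?thesis by simp
    next
      case False
      define z where "z = y /\<^sub>R norm y"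
      have "z \<in> ?K" unfolding z_def using yS False sS by (simp add: subspace_scale)
      hence "?f z \<le> ?f u" using u by blast
      moreover have "?f y = (norm y)^2 * ?f z"
        unfolding z_def using False
        by (simp add: matrix_vector_mult_scaleR power2_eq_square field_simps)
      moreover have "y \<bullet> y = (norm y)^2" by (simp add: power2_norm_eq_inner)
      moreover have "?f z * (norm y)^2 \<le> ?f u * (norm y)^2"
        by (rule mult_right_mono) (use `?f z \<le> ?f u` in simp_all)
      ultimately show ?thesis by (simp add: mult.commute)
    qed
  qed
qed

lemma eig_extend:
  fixes A :: "real^'n^'n"
  assumes symA: "transpose A = A" and fB: "finite B"
    and eB: "\<forall>b\<in>B. norm b = 1 \<and> (\<exists>\<mu>. A *v b = \<mu> *\<^sub>R b)"
    and oB: "pairwise orthogonal B" and cB: "card B < CARD('n)"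
  shows "\<exists>u. norm u = 1 \<and> (\<exists>\<mu>. A *v u = \<mu> *\<^sub>R u) \<and> (\<forall>b\<in>B. orthogonal b u)"
proof -
  define S where "S = {y. \<forall>x\<in>B. orthogonal x y}"
  have sS: "subspace S" unfolding S_def by (rule subspace_orthogonal_to_vectors)
  have "S = (\<Inter>b\<in>B. {y. b \<bullet> y = 0})" unfolding S_def orthogonal_def by auto
  hence cS: "closed S" by (simp add: closed_INT closed_hyperplane)
  have inv: "\<forall>x\<in>S. A *v x \<in> S"
  proof (intro ballI)
    fix x assume x: "x \<in> S"
    { fix b assume b: "b \<in> B"
      then obtain \<mu> where m: "A *v b = \<mu> *\<^sub>R b" using eB by blast
      have "b \<bullet> (A *v x) = (A *v b) \<bullet> x" by (rule sym_inner[OF symA])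
      also have "\<dots> = \<mu> * (b \<bullet> x)" using m by simp
      also have "\<dots> = 0" using x b unfolding S_def orthogonal_def by simp
      finally have "orthogonal b (A *v x)" unfolding orthogonal_def . }
    thus "A *v x \<in> S" unfolding S_def by blast
  qed
  have "0 \<notin> B" using eB by force
  hence ind: "independent B" using oB pairwise_orthogonal_independent by blast
  have dB: "dim B < DIM(real^'n)" using dim_eq_card_independent[OF ind] cB by simp
  obtain x where x: "x \<noteq> 0" "\<And>y. y \<in> span B \<Longrightarrow> orthogonal x y"
    using orthogonal_to_subspace_exists[OF dB] by blast
  have "x \<in> S" unfolding S_def using x(2) span_base orthogonal_commute by blast
  hence "S \<noteq> {0}" using x(1) by blast
  then obtain u where u: "u \<in> S" "norm u = 1" "\<forall>x\<in>S. x \<bullet> (A *v x) \<le> (u \<bullet> (A *v u)) * (x \<bullet> x)"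
    using max_rayleigh[OF cS sS] by blast
  have "A *v u = (u \<bullet> (A *v u)) *\<^sub>R u" by (rule rayleigh_eig[OF symA sS inv u])
  thus ?thesis using u unfolding S_def by blast
qed

lemma eig_set:
  fixes A :: "real^'n^'n"
  assumes symA: "transpose A = A"
  shows "k \<le> CARD('n) \<Longrightarrow> \<exists>B. finite B \<and> card B = k \<and>
    (\<forall>b\<in>B. norm b = 1 \<and> (\<exists>\<mu>. A *v b = \<mu> *\<^sub>R b)) \<and> pairwise orthogonal B"
proof (induction k)
  case 0 thus ?case by (intro exI[of _ "{}"]) auto
next
  case (Suc k)
  then obtain B where B: "finite B" "card B = k" "\<forall>b\<in>B. norm b = 1 \<and> (\<exists>\<mu>. A *v b = \<mu> *\<^sub>R b)"
     "pairwise orthogonal B" by auto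
  obtain u where u: "norm u = 1" "\<exists>\<mu>. A *v u = \<mu> *\<^sub>R u" "\<forall>b\<in>B. orthogonal b u"
    using eig_extend[OF symA B(1) B(3) B(4)] B(2) Suc.prems by auto
  have "u \<notin> B" using u by (metis orthogonal_self norm_zero zero_neq_one)
  show ?case
  proof (intro exI[of _ "insert u B"] conjI)
    show "finite (insert u B)" using B by simp
    show "card (insert u B) = Suc k" using B `u \<notin> B` by simp
    show "\<forall>b\<in>insert u B. norm b = 1 \<and> (\<exists>\<mu>. A *v b = \<mu> *\<^sub>R b)" using B u by auto
    show "pairwise orthogonal (insert u B)" using B(4) u(3)
      by (auto simp: pairwise_insert orthogonal_commute)
  qed
qed

lemma eig_family:
  fixes A :: "real^'n^'n"
  assumes symA: "transpose A = A"
  shows "\<exists>(c::'n \<Rightarrow> real^'n) \<mu>. (\<forall>i. A *v c i = \<mu> i *\<^sub>R c i) \<and> (\<forall>i j. c i \<bullet> c j = (if i = j then 1 else 0))"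
proof -
  obtain B where B: "finite B" "card B = CARD('n)" "\<forall>b\<in>B. norm b = 1 \<and> (\<exists>\<mu>. A *v b = \<mu> *\<^sub>R b)"
     "pairwise orthogonal B" using eig_set[OF symA, of "CARD('n)"] by auto
  obtain h where h: "bij_betw h (UNIV::'n set) B"
    using finite_same_card_bij[of "UNIV::'n set" B] B by auto
  define \<mu> where "\<mu> i = (SOME m. A *v h i = m *\<^sub>R h i)" for i
  have hB: "h i \<in> B" for i using h by (auto simp: bij_betw_def)
  have e1: "\<forall>i. A *v h i = \<mu> i *\<^sub>R h i"
  proof
    fix i
    have "\<exists>m. A *v h i = m *\<^sub>R h i" using B(3) hB[of i] by blast
    thus "A *v h i = \<mu> i *\<^sub>R h i" unfolding \<mu>_def by (rule someI_ex)
  qed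
  moreover have "\<forall>i j. h i \<bullet> h j = (if i = j then 1 else 0)"
  proof (intro allI)
    fix i j show "h i \<bullet> h j = (if i = j then 1 else 0)"
  proof (cases "i = j")
    case True thus ?thesis using B(3) hB[of i] by (simp add: norm_eq_1)
  next
    case False
    hence "h i \<noteq> h j" using h by (auto simp: bij_betw_def inj_on_def)
    thus ?thesis using B(4) hB[of i] hB[of j] False by (auto simp: pairwise_def orthogonal_def)
  qed
  qed
  ultimately show ?thesis by blast
qed



lemma sort_perm:
  fixes f :: "'n::{finite,linorder} \<Rightarrow> real"
  shows "\<exists>p. p permutes (UNIV::'n set) \<and> (\<forall>i j. i \<le> j \<longrightarrow> f (p j) \<le> f (p i))"
proof -
  define w :: "'n \<Rightarrow> real" where "w i = real (card {j. i < j})" for i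
  have wmono: "w j < w i" if "i < j" for i j
  proof -
    have "{k. j < k} \<subset> {k. i < k}" using that by auto
    hence "card {k. j < k} < card {k. i < k}" by (simp add: psubset_card_mono)
    thus ?thesis unfolding w_def by simp
  qed
  define P where "P = {p. p permutes (UNIV::'n set)}"
  define sc where "sc p = (\<Sum>i\<in>UNIV. w i * f (p i))" for p :: "'n \<Rightarrow> 'n"
  have fP: "finite P" unfolding P_def by (simp add: finite_permutations)
  have neP: "P \<noteq> {}" unfolding P_def using permutes_id by blast
  define M where "M = Max (sc ` P)"
  have "M \<in> sc ` P" unfolding M_def using fP neP by (intro Max_in) auto
  then obtain p where pP: "p \<in> P" and pM: "sc p = M" by auto
  have maxp: "sc q \<le> sc p" if "q \<in> P" for q using that fP pM unfolding M_def by simp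
  show ?thesis
  proof (intro exI conjI allI impI)
    show "p permutes UNIV" using pP unfolding P_def by simp
    fix i j :: 'n assume ij: "i \<le> j"
    show "f (p j) \<le> f (p i)"
    proof (rule ccontr)
      assume c: "\<not> f (p j) \<le> f (p i)"
      hence "i \<noteq> j" by auto
      hence ilj: "i < j" using ij by simp
      define q where "q = p \<circ> Transposition.transpose i j"
      have qP: "q \<in> P" unfolding q_def P_def using pP unfolding P_def
        by (simp add: permutes_compose permutes_swap_id)
      have "sc q - sc p = (\<Sum>k\<in>UNIV. w k * (f (q k) - f (p k)))"
        unfolding sc_def by (simp add: sum_subtractf algebra_simps)
      also have "\<dots> = (\<Sum>k\<in>{i,j}. w k * (f (q k) - f (p k)))"
        by (rule sum.mono_neutral_right) (auto simp: q_def transpose_def)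
      also have "\<dots> = (w i - w j) * (f (p j) - f (p i))"
        using `i \<noteq> j` by (simp add: q_def algebra_simps)
      also have "\<dots> > 0" using wmono[OF ilj] c by simp
      finally show False using maxp[OF qP] by simp
    qed
  qed
qed

lemma eig_decomp:
  fixes A :: "real^'n^'n"
  assumes ev: "\<forall>i. A *v c i = \<mu> i *\<^sub>R c i"
    and on: "\<forall>i j. c i \<bullet> c j = (if i = j then 1 else 0)"
    and p: "p permutes (UNIV::'n set)"
  defines "U \<equiv> (\<chi> r j. c (p j) $ r)"
  shows "orthogonal_matrix U \<and> A = U ** diag_mat (\<chi> j. \<mu> (p j)) ** transpose U"
proof -
  have "transpose U ** U = mat 1"
  proof -
    have "(transpose U ** U) $ j $ k = mat 1 $ j $ k" for j k
    proof -
      have "(transpose U ** U) $ j $ k = c (p j) \<bullet> c (p k)"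
        unfolding U_def matrix_matrix_mult_def transpose_def inner_vec_def by simp
      also have "\<dots> = (if j = k then 1 else 0)" using on permutes_inj[OF p]
        by (simp add: inj_eq)
      finally show ?thesis by (simp add: mat_def)
    qed
    thus ?thesis by (simp add: vec_eq_iff)
  qed
  hence oU: "orthogonal_matrix U" by (simp add: orthogonal_matrix)
  have AU: "A ** U = U ** diag_mat (\<chi> j. \<mu> (p j))"
  proof -
    have "(A ** U) $ r $ j = (U ** diag_mat (\<chi> j. \<mu> (p j))) $ r $ j" for r j
    proof -
      have "(A ** U) $ r $ j = (A *v c (p j)) $ r"
        unfolding U_def matrix_matrix_mult_def matrix_vector_mult_def by simp
      also have "\<dots> = \<mu> (p j) * c (p j) $ r" using ev by simp
      also have "\<dots> = (U ** diag_mat (\<chi> j. \<mu> (p j))) $ r $ j"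
        unfolding U_def matrix_matrix_mult_def diag_mat_def
        by (simp add: if_distrib cong: if_cong)
      finally show ?thesis .
    qed
    thus ?thesis by (simp add: vec_eq_iff)
  qed
  have "A = A ** (U ** transpose U)" using oU by (simp add: orthogonal_matrix_def)
  also have "\<dots> = U ** diag_mat (\<chi> j. \<mu> (p j)) ** transpose U"
    by (simp add: matrix_mul_assoc AU)
  finally show ?thesis using oU by simp
qed

lemma spectral:
  fixes A :: "((real,'n::{finite,linorder}) vec,'n) vec"
  assumes symA: "transpose A = A"
  shows "\<exists>U l. orthogonal_matrix U \<and> nonincr_vec l \<and> A = U ** diag_mat l ** transpose U"
proof -
  obtain c :: "'n \<Rightarrow> (real,'n) vec" and \<mu> where cm: "\<forall>i. A *v c i = \<mu> i *\<^sub>R c i" "\<forall>i j. c i \<bullet> c j = (if i = j then 1 else 0)"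
    using eig_family[OF symA] by blast
  obtain p where p: "p permutes UNIV" "\<forall>i j. i \<le> j \<longrightarrow> \<mu> (p j) \<le> \<mu> (p i)"
    using sort_perm[of \<mu>] by blast
  have "nonincr_vec (\<chi> j. \<mu> (p j))" unfolding nonincr_vec_def using p(2) by simp
  thus ?thesis using eig_decomp[OF cm p(1)] by blast
qed



lemma diag_mv: "(diag_mat l *v y) $ i = l $ i * y $ i"
proof -
  have "(diag_mat l *v y) $ i = (\<Sum>j\<in>UNIV. (if i = j then l $ i else 0) * y $ j)"
    unfolding diag_mat_def matrix_vector_mult_def by simp
  also have "\<dots> = (\<Sum>j\<in>UNIV. (if i = j then l $ i * y $ j else 0))"
    by (rule sum.cong) auto
  also have "\<dots> = l $ i * y $ i" by (simp add: sum.delta)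
  finally show ?thesis .
qed

lemma quad_form:
  fixes A U :: "real^'n^'n"
  assumes "A = U ** diag_mat l ** transpose U"
  shows "x \<bullet> (A *v x) = (\<Sum>i\<in>UNIV. l $ i * ((transpose U *v x) $ i)^2)"
proof -
  define y where "y = transpose U *v x"
  have "A *v x = U *v (diag_mat l *v y)" unfolding assms y_def by (simp only: matrix_vector_mul_assoc matrix_mul_assoc)
  hence "x \<bullet> (A *v x) = x \<bullet> (U *v (diag_mat l *v y))" by simp
  also have "\<dots> = y \<bullet> (diag_mat l *v y)" unfolding y_def by (rule inner_matvec)
  also have "\<dots> = (\<Sum>i\<in>UNIV. l $ i * (y $ i)^2)"
    unfolding inner_vec_def diag_mv by (simp add: power2_eq_square mult_ac)
  finally show ?thesis unfolding y_def .
qed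

lemma rearr:
  fixes l :: "real^'n::{finite,linorder}" and p :: "'n \<Rightarrow> real"
  assumes l: "nonincr_vec l" and dT: "\<forall>i j. i \<in> T \<longrightarrow> j \<le> i \<longrightarrow> j \<in> T"
    and p0: "\<forall>i. 0 \<le> p i" and p1: "\<forall>i. p i \<le> 1" and ps: "(\<Sum>i\<in>UNIV. p i) = real (card T)"
  shows "(\<Sum>i\<in>UNIV. l $ i * p i) \<le> (\<Sum>i\<in>T. l $ i)"
proof -
  obtain c where c1: "\<forall>i\<in>T. c \<le> l $ i" and c2: "\<forall>i\<in>-T. l $ i \<le> c"
  proof (cases "T = {}")
    case True
    show ?thesis by (rule that[of "Max (range (\<lambda>i. l $ i))"]) (auto simp: True)
  next
    case False
    show ?thesis
    proof (rule that[of "Min ((\<lambda>i. l $ i) ` T)"])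
      show "\<forall>i\<in>T. Min ((\<lambda>i. l $ i) ` T) \<le> l $ i" by simp
      show "\<forall>i\<in>-T. l $ i \<le> Min ((\<lambda>i. l $ i) ` T)"
      proof
        fix j assume j: "j \<in> -T"
        have "l $ j \<le> l $ i" if "i \<in> T" for i
        proof -
          have "\<not> j \<le> i" using j that dT by auto
          hence "i \<le> j" by simp
          thus ?thesis using l unfolding nonincr_vec_def by blast
        qed
        thus "l $ j \<le> Min ((\<lambda>i. l $ i) ` T)" using False by simp
      qed
    qed
  qed
  have split: "(\<Sum>i\<in>UNIV. f i) = (\<Sum>i\<in>T. f i) + (\<Sum>i\<in>-T. f i)" for f :: "'n \<Rightarrow> real"
  proof -
    have "UNIV = T \<union> -T" by auto
    hence "(\<Sum>i\<in>UNIV. f i) = (\<Sum>i\<in>T \<union> -T. f i)" by simp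
    also have "\<dots> = (\<Sum>i\<in>T. f i) + (\<Sum>i\<in>-T. f i)"
      by (rule sum.union_disjoint) auto
    finally show ?thesis .
  qed
  have "(\<Sum>i\<in>T. l $ i) - (\<Sum>i\<in>UNIV. l $ i * p i)
      = (\<Sum>i\<in>T. (l $ i - c) * (1 - p i)) + (\<Sum>i\<in>-T. (c - l $ i) * p i)
        + c * (real (card T) - (\<Sum>i\<in>UNIV. p i))"
  proof -
    have "(\<Sum>i\<in>T. (l $ i - c) * (1 - p i)) = (\<Sum>i\<in>T. l $ i - l $ i * p i - c + c * p i)"
      by (rule sum.cong) (auto simp: algebra_simps)
    hence e1: "(\<Sum>i\<in>T. (l $ i - c) * (1 - p i)) = (\<Sum>i\<in>T. l $ i) - (\<Sum>i\<in>T. l $ i * p i)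
       - c * real (card T) + c * (\<Sum>i\<in>T. p i)"
      by (simp add: sum.distrib sum_subtractf sum_distrib_left)
    have "(\<Sum>i\<in>-T. (c - l $ i) * p i) = (\<Sum>i\<in>-T. c * p i - l $ i * p i)"
      by (rule sum.cong) (auto simp: algebra_simps)
    hence e2: "(\<Sum>i\<in>-T. (c - l $ i) * p i) = c * (\<Sum>i\<in>-T. p i) - (\<Sum>i\<in>-T. l $ i * p i)"
      by (simp add: sum_subtractf sum_distrib_left)
    show ?thesis using split[of "\<lambda>i. l $ i * p i"] split[of p] e1 e2 by (simp add: algebra_simps)
  qed
  also have "\<dots> \<ge> 0"
  proof -
    have "(\<Sum>i\<in>T. (l $ i - c) * (1 - p i)) \<ge> 0"
      using c1 p1 by (intro sum_nonneg) simp
    moreover have "(\<Sum>i\<in>-T. (c - l $ i) * p i) \<ge> 0"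
      using c2 p0 by (intro sum_nonneg) simp
    ultimately show ?thesis using ps by simp
  qed
  finally show ?thesis by simp
qed

lemma orth_rows: "orthogonal_matrix M \<Longrightarrow> (\<Sum>j\<in>UNIV. (M $ i $ j)^2) = 1"
proof -
  assume "orthogonal_matrix M"
  hence "(M ** transpose M) $ i $ i = 1" by (simp add: orthogonal_matrix_def mat_def)
  thus ?thesis by (simp add: matrix_matrix_mult_def transpose_def power2_eq_square)
qed

lemma orth_cols: "orthogonal_matrix M \<Longrightarrow> (\<Sum>i\<in>UNIV. (M $ i $ j)^2) = 1"
proof -
  assume "orthogonal_matrix M"
  hence "(transpose M ** M) $ j $ j = 1" by (simp add: orthogonal_matrix_def mat_def)
  thus ?thesis by (simp add: matrix_matrix_mult_def transpose_def power2_eq_square)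
qed

lemma kf_bound:
  fixes A U W :: "((real,'n::{finite,linorder}) vec,'n) vec"
  assumes oU: "orthogonal_matrix U" and l: "nonincr_vec l" and A: "A = U ** diag_mat l ** transpose U"
    and oW: "orthogonal_matrix W" and dT: "\<forall>i j. i \<in> T \<longrightarrow> j \<le> i \<longrightarrow> j \<in> T"
    and cJ: "card J = card T"
  shows "(\<Sum>j\<in>J. column j W \<bullet> (A *v column j W)) \<le> (\<Sum>i\<in>T. l $ i)"
proof -
  define M where "M = transpose U ** W"
  have oM: "orthogonal_matrix M" unfolding M_def using oU oW
    by (simp add: orthogonal_matrix_mul orthogonal_matrix_transpose)
  have col: "(transpose U *v column j W) $ i = M $ i $ j" for i j
    unfolding M_def matrix_vector_mult_def matrix_matrix_mult_def column_def by simp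
  define p where "p i = (\<Sum>j\<in>J. (M $ i $ j)^2)" for i
  have "(\<Sum>j\<in>J. column j W \<bullet> (A *v column j W)) = (\<Sum>j\<in>J. \<Sum>i\<in>UNIV. l $ i * (M $ i $ j)^2)"
    by (simp only: quad_form[OF A] col)
  also have "\<dots> = (\<Sum>i\<in>UNIV. l $ i * p i)"
    unfolding p_def by (simp add: sum.swap[of _ J] sum_distrib_left)
  also have "\<dots> \<le> (\<Sum>i\<in>T. l $ i)"
  proof (rule rearr[OF l dT])
    show "\<forall>i. 0 \<le> p i" unfolding p_def by (simp add: sum_nonneg)
    show "\<forall>i. p i \<le> 1"
    proof
      fix i
      have "p i \<le> (\<Sum>j\<in>UNIV. (M $ i $ j)^2)" unfolding p_def by (rule sum_mono2) auto
      thus "p i \<le> 1" using orth_rows[OF oM] by simp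
    qed
    have "finite J"
    proof (rule ccontr)
      assume "infinite J" thus False using finite_subset[of J UNIV] by simp
    qed
    have "(\<Sum>i\<in>UNIV. \<Sum>j\<in>J. (M $ i $ j)^2) = (\<Sum>j\<in>J. \<Sum>i\<in>UNIV. (M $ i $ j)^2)"
      by (rule sum.swap)
    thus "(\<Sum>i\<in>UNIV. p i) = real (card T)"
      unfolding p_def using orth_cols[OF oM] cJ by simp
  qed
  finally show ?thesis .
qed

lemma kf_eq:
  fixes A U :: "((real,'n::{finite,linorder}) vec,'n) vec"
  assumes oU: "orthogonal_matrix U" and A: "A = U ** diag_mat l ** transpose U"
  shows "column j U \<bullet> (A *v column j U) = l $ j"
proof -
  have h: "(transpose U *v column j U) $ i = (if i = j then 1 else 0)" for i
  proof -
    have "(transpose U *v column j U) $ i = (transpose U ** U) $ i $ j"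
      unfolding matrix_vector_mult_def matrix_matrix_mult_def column_def by simp
    thus ?thesis using oU by (simp add: orthogonal_matrix mat_def)
  qed
  have "(\<Sum>i\<in>UNIV. l $ i * (if i = j then 1 else 0)^2) = (\<Sum>i\<in>UNIV. if i = j then l $ j else 0)"
    by (rule sum.cong) auto
  thus ?thesis unfolding quad_form[OF A] h by (simp add: sum.delta')
qed



definition dclosed :: "'n::linorder set \<Rightarrow> bool" where
  "dclosed T \<longleftrightarrow> (\<forall>i j. i \<in> T \<longrightarrow> j \<le> i \<longrightarrow> j \<in> T)"

lemma dclosed_le: "dclosed {j. j \<le> (i::'n::linorder)}" unfolding dclosed_def by auto
lemma dclosed_less: "dclosed {j. j < (i::'n::linorder)}" unfolding dclosed_def by auto

lemma sum_le_less:
  fixes f :: "'n::{finite,linorder} \<Rightarrow> real"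
  shows "(\<Sum>j\<in>{j. j \<le> i}. f j) = f i + (\<Sum>j\<in>{j. j < i}. f j)"
proof -
  have "{j. j \<le> i} = insert i {j. j < i}" by auto
  thus ?thesis by simp
qed

lemma eig_unique:
  fixes A U1 U2 :: "((real,'n::{finite,linorder}) vec,'n) vec"
  assumes o1: "orthogonal_matrix U1" and n1: "nonincr_vec l1" and A1: "A = U1 ** diag_mat l1 ** transpose U1"
    and o2: "orthogonal_matrix U2" and n2: "nonincr_vec l2" and A2: "A = U2 ** diag_mat l2 ** transpose U2"
  shows "l1 = l2"
proof -
  have le: "(\<Sum>i\<in>T. lb $ i) \<le> (\<Sum>i\<in>T. la $ i)"
    if "dclosed T" "orthogonal_matrix Ua" "nonincr_vec la" "A = Ua ** diag_mat la ** transpose Ua"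
       "orthogonal_matrix Ub" "A = Ub ** diag_mat lb ** transpose Ub" for T la lb Ua Ub
  proof -
    have "(\<Sum>i\<in>T. lb $ i) = (\<Sum>j\<in>T. column j Ub \<bullet> (A *v column j Ub))"
      using kf_eq[OF that(5,6)] by simp
    also have "\<dots> \<le> (\<Sum>i\<in>T. la $ i)"
      by (rule kf_bound[OF that(2,3,4,5)]) (use that(1) in \<open>auto simp: dclosed_def\<close>)
    finally show ?thesis .
  qed
  have eq: "(\<Sum>i\<in>T. l1 $ i) = (\<Sum>i\<in>T. l2 $ i)" if "dclosed T" for T
    using le[OF that o1 n1 A1 o2 A2] le[OF that o2 n2 A2 o1 A1] by simp
  show ?thesis
  unfolding vec_eq_iff
  proof
    fix i
    show "l1 $ i = l2 $ i"
      using eq[OF dclosed_le[of i]] eq[OF dclosed_less[of i]]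
      by (simp add: sum_le_less[of "\<lambda>j. l1 $ j"] sum_le_less[of "\<lambda>j. l2 $ j"])
  qed
qed

lemma eigvals_eq:
  fixes A U :: "((real,'n::{finite,linorder}) vec,'n) vec"
  assumes "orthogonal_matrix U" "nonincr_vec l" "A = U ** diag_mat l ** transpose U"
  shows "eigvals A = l"
  unfolding eigvals_def
proof (rule the_equality)
  show "nonincr_vec l \<and> (\<exists>U. orthogonal_matrix U \<and> A = U ** diag_mat l ** transpose U)"
    using assms by blast
  fix l' assume "nonincr_vec l' \<and> (\<exists>U. orthogonal_matrix U \<and> A = U ** diag_mat l' ** transpose U)"
  thus "l' = l" using eig_unique[OF _ _ _ assms] by blast
qed

lemma eigvals_rep:
  fixes A :: "((real,'n::{finite,linorder}) vec,'n) vec"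
  assumes "transpose A = A"
  shows "\<exists>U. orthogonal_matrix U \<and> nonincr_vec (eigvals A) \<and> A = U ** diag_mat (eigvals A) ** transpose U"
  using spectral[OF assms] eigvals_eq by metis

definition gsum :: "'n set \<Rightarrow> ((real,'n::{finite,linorder}) vec,'n) vec \<Rightarrow> real" where
  "gsum T A = (\<Sum>i\<in>T. eigvals A $ i)"

lemma gsum_ge:
  fixes A W :: "((real,'n::{finite,linorder}) vec,'n) vec"
  assumes "transpose A = A" "dclosed T" "orthogonal_matrix W" "card J = card T"
  shows "(\<Sum>j\<in>J. column j W \<bullet> (A *v column j W)) \<le> gsum T A"
proof -
  obtain U where U: "orthogonal_matrix U" "nonincr_vec (eigvals A)" "A = U ** diag_mat (eigvals A) ** transpose U"
    using eigvals_rep[OF assms(1)] by blast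
  show ?thesis unfolding gsum_def
    by (rule kf_bound[OF U assms(3)]) (use assms in \<open>auto simp: dclosed_def\<close>)
qed

lemma gsum_eq:
  fixes A :: "((real,'n::{finite,linorder}) vec,'n) vec"
  assumes "transpose A = A"
  shows "\<exists>W. orthogonal_matrix W \<and> gsum T A = (\<Sum>j\<in>T. column j W \<bullet> (A *v column j W))"
proof -
  obtain U where U: "orthogonal_matrix U" "nonincr_vec (eigvals A)" "A = U ** diag_mat (eigvals A) ** transpose U"
    using eigvals_rep[OF assms(1)] by blast
  show ?thesis unfolding gsum_def using kf_eq[OF U(1) U(3)] U(1) by auto
qed

lemma matvec_norm: "norm ((M::real^'n^'n) *v x) \<le> real CARD('n) * norm M * norm (x::real^'n)"
proof -
  have "norm (M *v x) \<le> (\<Sum>i\<in>UNIV. \<bar>(M *v x) $ i\<bar>)" by (rule norm_le_l1_cart)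
  also have "\<dots> \<le> (\<Sum>i\<in>(UNIV::'n set). norm M * norm x)"
  proof (rule sum_mono)
    fix i :: 'n
    have "(M *v x) $ i = M $ i \<bullet> x" by (simp add: matrix_vector_mult_def inner_vec_def)
    hence "\<bar>(M *v x) $ i\<bar> \<le> norm (M $ i) * norm x" using Cauchy_Schwarz_ineq2 by simp
    also have "\<dots> \<le> norm M * norm x" by (rule mult_right_mono[OF Finite_Cartesian_Product.norm_nth_le]) simp
    finally show "\<bar>(M *v x) $ i\<bar> \<le> norm M * norm x" .
  qed
  also have "\<dots> = real CARD('n) * norm M * norm x" by simp
  finally show ?thesis .
qed

lemma quad_bound:
  fixes M :: "real^'n^'n"
  assumes "norm x = 1"
  shows "\<bar>x \<bullet> (M *v x)\<bar> \<le> real CARD('n) * norm M"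
proof -
  have "\<bar>x \<bullet> (M *v x)\<bar> \<le> norm x * norm (M *v x)" by (rule Cauchy_Schwarz_ineq2)
  also have "\<dots> \<le> real CARD('n) * norm M" using matvec_norm[of M x] assms by simp
  finally show ?thesis .
qed

lemma col_norm: "orthogonal_matrix (W::real^'n^'n) \<Longrightarrow> norm (column j W) = 1"
proof -
  assume "orthogonal_matrix W"
  hence "(\<forall>i. norm (column i W) = 1) \<and> (\<forall>i j. i \<noteq> j \<longrightarrow> orthogonal (column i W) (column j W))"
    by (rule iffD1[OF orthogonal_matrix_orthonormal_columns])
  thus ?thesis by blast
qed

lemma gsum_lip:
  fixes A B :: "((real,'n::{finite,linorder}) vec,'n) vec"
  assumes sA: "transpose A = A" and sB: "transpose B = B" and dT: "dclosed T"
  shows "gsum T A - gsum T B \<le> real CARD('n) * real CARD('n) * norm (A - B)"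
proof -
  obtain W where W: "orthogonal_matrix W" "gsum T A = (\<Sum>j\<in>T. column j W \<bullet> (A *v column j W))"
    using gsum_eq[OF sA] by blast
  have "(\<Sum>j\<in>T. column j W \<bullet> (B *v column j W)) \<le> gsum T B"
    by (rule gsum_ge[OF sB dT W(1)]) simp
  hence "gsum T A - gsum T B \<le> (\<Sum>j\<in>T. column j W \<bullet> ((A - B) *v column j W))"
    using W(2) by (simp add: matrix_vector_mult_diff_rdistrib inner_diff_right sum_subtractf)
  also have "\<dots> \<le> (\<Sum>j\<in>T. real CARD('n) * norm (A - B))"
  proof (rule sum_mono)
    fix j assume "j \<in> T"
    show "column j W \<bullet> ((A - B) *v column j W) \<le> real CARD('n) * norm (A - B)"
      by (rule abs_le_D1[OF quad_bound[OF col_norm[OF W(1)]]])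
  qed
  also have "\<dots> = real (card T) * (real CARD('n) * norm (A - B))" by simp
  also have "\<dots> \<le> real CARD('n) * (real CARD('n) * norm (A - B))"
    by (rule mult_right_mono) (simp_all add: card_mono)
  finally show ?thesis by simp
qed

lemma lin4:
  fixes a1 a0 b1 b0 K :: real
  assumes "a1 - b1 \<le> K" "b0 - a0 \<le> K" "b1 - a1 \<le> K" "a0 - b0 \<le> K"
  shows "\<bar>(a1 - a0) - (b1 - b0)\<bar> \<le> 2 * K"
  using assms by (simp add: abs_le_iff)

lemma eig_lip:
  fixes A B :: "((real,'n::{finite,linorder}) vec,'n) vec"
  assumes sA: "transpose A = A" and sB: "transpose B = B"
  shows "\<bar>eigvals A $ i - eigvals B $ i\<bar> \<le> 2 * real CARD('n) * real CARD('n) * norm (A - B)"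
proof -
  have e: "eigvals C $ i = gsum {j. j \<le> i} C - gsum {j. j < i} C" for C :: "((real,'n) vec,'n) vec"
    unfolding gsum_def by (simp add: sum_le_less[of "\<lambda>j. eigvals C $ j"])
  have n: "norm (B - A) = norm (A - B)" by (rule norm_minus_commute)
  have k: "2 * real CARD('n) * real CARD('n) * norm (A - B) = 2 * (real CARD('n) * real CARD('n) * norm (A - B))"
    by simp
  show ?thesis unfolding e k
    by (rule lin4[OF gsum_lip[OF sA sB dclosed_le[of i]] gsum_lip[OF sB sA dclosed_less[of i], unfolded n]
      gsum_lip[OF sB sA dclosed_le[of i], unfolded n] gsum_lip[OF sA sB dclosed_less[of i]]])
qed

lemma sym_comb: "transpose A = A \<Longrightarrow> transpose B = B \<Longrightarrow> transpose (a *\<^sub>R A + b *\<^sub>R B) = a *\<^sub>R A + b *\<^sub>R (B::real^'n^'n)"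
  by (simp add: transpose_def vec_eq_iff)

lemma mv_comb: "((a *\<^sub>R A + b *\<^sub>R B) *v (w::real^'n)) = a *\<^sub>R (A *v w) + b *\<^sub>R ((B::real^'n^'m) *v w)"
  by (simp add: matrix_vector_mult_add_rdistrib scaleR_matrix_vector_assoc)

lemma gsum_convex:
  fixes A B :: "((real,'n::{finite,linorder}) vec,'n) vec"
  assumes sA: "transpose A = A" and sB: "transpose B = B" and dT: "dclosed T"
    and s0: "0 \<le> s" and s1: "s \<le> 1"
  shows "gsum T ((1 - s) *\<^sub>R A + s *\<^sub>R B) \<le> (1 - s) * gsum T A + s * gsum T B"
proof -
  define C where "C = (1 - s) *\<^sub>R A + s *\<^sub>R B"
  have sC: "transpose C = C" unfolding C_def by (rule sym_comb[OF sA sB])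
  obtain W where W: "orthogonal_matrix W" "gsum T C = (\<Sum>j\<in>T. column j W \<bullet> (C *v column j W))"
    using gsum_eq[OF sC] by blast
  have "gsum T C = (\<Sum>j\<in>T. column j W \<bullet> (C *v column j W))" by (rule W(2))
  also have "\<dots> = (\<Sum>j\<in>T. (1 - s) * (column j W \<bullet> (A *v column j W)) + s * (column j W \<bullet> (B *v column j W)))"
    by (rule sum.cong) (simp_all only: C_def mv_comb inner_add_right inner_scaleR_right)
  also have "\<dots> = (1 - s) * (\<Sum>j\<in>T. column j W \<bullet> (A *v column j W)) + s * (\<Sum>j\<in>T. column j W \<bullet> (B *v column j W))"
    by (simp only: sum.distrib sum_distrib_left)
  also have "\<dots> \<le> (1 - s) * gsum T A + s * gsum T B"
  proof (rule add_mono)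
    show "(1 - s) * (\<Sum>j\<in>T. column j W \<bullet> (A *v column j W)) \<le> (1 - s) * gsum T A"
      by (rule mult_left_mono[OF gsum_ge[OF sA dT W(1)]]) (use s1 in simp_all)
    show "s * (\<Sum>j\<in>T. column j W \<bullet> (B *v column j W)) \<le> s * gsum T B"
      by (rule mult_left_mono[OF gsum_ge[OF sB dT W(1)]]) (use s0 in simp_all)
  qed
  finally show ?thesis unfolding C_def .
qed



lemma Liminf_mono_filter: "F \<le> G \<Longrightarrow> Liminf G f \<le> Liminf F f"
  unfolding Liminf_def by (rule SUP_subset_mono) (auto simp: le_filter_def)

lemma Liminf_comp_le: "filterlim m G F \<Longrightarrow> Liminf G g \<le> Liminf F (\<lambda>y. g (m y))"
  unfolding filterlim_def
  using Liminf_mono_filter[of "filtermap m F" G g] Liminf_filtermap_le[of m F g] by (rule order_trans)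

lemma convex_dq_lim:
  fixes \<phi> :: "real \<Rightarrow> real"
  assumes conv: "\<And>s t. 0 \<le> s \<Longrightarrow> s \<le> 1 \<Longrightarrow> 0 \<le> t \<Longrightarrow> \<phi> (s * t) \<le> (1 - s) * \<phi> 0 + s * \<phi> t"
    and bd: "\<And>t. 0 < t \<Longrightarrow> \<phi> 0 - \<phi> t \<le> K * t"
  shows "\<exists>L. ((\<lambda>t. (\<phi> t - \<phi> 0) / t) \<longlongrightarrow> L) (at_right 0)"
proof -
  define q where "q t = (\<phi> t - \<phi> 0) / t" for t
  have mono: "q s \<le> q t" if s0: "0 < s" and "s \<le> t" for s t
  proof -
    have t0: "0 < t" using that by simp
    have "\<phi> ((s / t) * t) \<le> (1 - s / t) * \<phi> 0 + (s / t) * \<phi> t"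
      by (rule conv) (use that t0 in auto)
    hence "\<phi> s - \<phi> 0 \<le> (s / t) * (\<phi> t - \<phi> 0)" using t0 by (simp add: algebra_simps)
    moreover have "((\<phi> t - \<phi> 0) / t) * s = (s / t) * (\<phi> t - \<phi> 0)" by simp
    ultimately have "\<phi> s - \<phi> 0 \<le> ((\<phi> t - \<phi> 0) / t) * s" by (simp add: mult.commute)
    hence "(\<phi> s - \<phi> 0) / s \<le> (\<phi> t - \<phi> 0) / t" using pos_divide_le_eq[OF \<open>0 < s\<close>] by blast
    thus ?thesis unfolding q_def .
  qed
  have lower: "- K \<le> q t" if "0 < t" for t
  proof -
    have "- K * t \<le> \<phi> t - \<phi> 0" using bd[OF that] by simp
    thus ?thesis unfolding q_def using that by (simp add: le_divide_eq)
  qed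
  define L where "L = Inf (q ` {0<..})"
  have bdd: "bdd_below (q ` {0<..})" by (rule bdd_belowI[where m="- K"]) (use lower in auto)
  have ne: "q ` {0<..} \<noteq> {}" by auto
  have "(q \<longlongrightarrow> L) (at_right 0)"
  proof (rule order_tendstoI)
    fix y assume "y < L"
    moreover have "L \<le> q t" if "0 < t" for t unfolding L_def using bdd that by (auto intro: cInf_lower)
    ultimately show "eventually (\<lambda>t. y < q t) (at_right 0)"
      unfolding eventually_at_right_field by (intro exI[of _ 1]) force
  next
    fix y assume "L < y"
    then obtain t0 where t0: "t0 \<in> {0<..}" "q t0 < y" unfolding L_def using cInf_lessD[OF ne] by blast
    show "eventually (\<lambda>t. q t < y) (at_right 0)"
      unfolding eventually_at_right_field
    proof (intro exI[of _ t0] conjI allI impI)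
      show "0 < t0" using t0 by simp
      fix t :: real assume "0 < t" "t < t0"
      thus "q t < y" using mono[of t t0] t0 by simp
    qed
  qed
  thus ?thesis unfolding q_def by blast
qed

lemma sym_add: "transpose A = A \<Longrightarrow> transpose B = B \<Longrightarrow> transpose (A + t *\<^sub>R B) = A + t *\<^sub>R (B::real^'n^'n)"
  by (simp add: transpose_def vec_eq_iff)

lemma gsum_dir:
  fixes X H :: "((real,'n::{finite,linorder}) vec,'n) vec"
  assumes sX: "transpose X = X" and sH: "transpose H = H" and dT: "dclosed T"
  shows "\<exists>L. ((\<lambda>t. (gsum T (X + t *\<^sub>R H) - gsum T (X + 0 *\<^sub>R H)) / t) \<longlongrightarrow> L) (at_right 0)"
proof (rule convex_dq_lim[where \<phi> = "\<lambda>t. gsum T (X + t *\<^sub>R H)"])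
  fix s t :: real assume s: "0 \<le> s" "s \<le> 1" and "0 \<le> t"
  have e: "X + (s * t) *\<^sub>R H = (1 - s) *\<^sub>R X + s *\<^sub>R (X + t *\<^sub>R H)"
    by (simp add: algebra_simps)
  show "gsum T (X + (s * t) *\<^sub>R H) \<le> (1 - s) * gsum T (X + 0 *\<^sub>R H) + s * gsum T (X + t *\<^sub>R H)"
    unfolding e using gsum_convex[OF sX sym_add[OF sX sH] dT s] by simp
next
  fix t :: real assume "0 < t"
  have "gsum T (X + 0 *\<^sub>R H) - gsum T (X + t *\<^sub>R H) \<le> real CARD('n) * real CARD('n) * norm (X - (X + t *\<^sub>R H))"
    using gsum_lip[OF sX sym_add[OF sX sH] dT] by simp
  also have "\<dots> = (real CARD('n) * real CARD('n) * norm H) * t" using `0 < t` by simp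
  finally show "gsum T (X + 0 *\<^sub>R H) - gsum T (X + t *\<^sub>R H) \<le> (real CARD('n) * real CARD('n) * norm H) * t" .
qed

lemma eigvals_dir_lim:
  fixes X H :: "((real,'n::{finite,linorder}) vec,'n) vec"
  assumes sX: "transpose X = X" and sH: "transpose H = H"
  shows "((\<lambda>t. (1 / t) *\<^sub>R (eigvals (X + t *\<^sub>R H) - eigvals X)) \<longlongrightarrow> eigvals_dir X H) (at_right 0)"
proof -
  have "\<exists>L1. \<forall>i. ((\<lambda>t. (gsum {j. j \<le> i} (X + t *\<^sub>R H) - gsum {j. j \<le> i} (X + 0 *\<^sub>R H)) / t) \<longlongrightarrow> L1 i) (at_right 0)"
    by (rule choice) (use gsum_dir[OF sX sH dclosed_le] in blast)
  then obtain L1 where L1: "\<And>i. ((\<lambda>t. (gsum {j. j \<le> i} (X + t *\<^sub>R H) - gsum {j. j \<le> i} (X + 0 *\<^sub>R H)) / t) \<longlongrightarrow> L1 i) (at_right 0)" by blast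
  have "\<exists>L0. \<forall>i. ((\<lambda>t. (gsum {j. j < i} (X + t *\<^sub>R H) - gsum {j. j < i} (X + 0 *\<^sub>R H)) / t) \<longlongrightarrow> L0 i) (at_right 0)"
    by (rule choice) (use gsum_dir[OF sX sH dclosed_less] in blast)
  then obtain L0 where L0: "\<And>i. ((\<lambda>t. (gsum {j. j < i} (X + t *\<^sub>R H) - gsum {j. j < i} (X + 0 *\<^sub>R H)) / t) \<longlongrightarrow> L0 i) (at_right 0)" by blast
  define D where "D = (\<chi> i. L1 i - L0 i)"
  have e: "eigvals C $ i = gsum {j. j \<le> i} C - gsum {j. j < i} C" for C :: "((real,'n) vec,'n) vec" and i
    unfolding gsum_def by (simp add: sum_le_less[of "\<lambda>j. eigvals C $ j"])
  have lim: "((\<lambda>t. (1 / t) *\<^sub>R (eigvals (X + t *\<^sub>R H) - eigvals X)) \<longlongrightarrow> D) (at_right 0)"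
  proof (rule vec_tendstoI)
    fix i
    have "(\<lambda>t. ((1 / t) *\<^sub>R (eigvals (X + t *\<^sub>R H) - eigvals X)) $ i) =
      (\<lambda>t. (gsum {j. j \<le> i} (X + t *\<^sub>R H) - gsum {j. j \<le> i} (X + 0 *\<^sub>R H)) / t
         - (gsum {j. j < i} (X + t *\<^sub>R H) - gsum {j. j < i} (X + 0 *\<^sub>R H)) / t)"
      by (rule ext) (simp add: e diff_divide_distrib)
    moreover have "((\<lambda>t. (gsum {j. j \<le> i} (X + t *\<^sub>R H) - gsum {j. j \<le> i} (X + 0 *\<^sub>R H)) / t
         - (gsum {j. j < i} (X + t *\<^sub>R H) - gsum {j. j < i} (X + 0 *\<^sub>R H)) / t) \<longlongrightarrow> D $ i) (at_right 0)"
      unfolding D_def using tendsto_diff[OF L1 L0] by simp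
    ultimately show "((\<lambda>t. ((1 / t) *\<^sub>R (eigvals (X + t *\<^sub>R H) - eigvals X)) $ i) \<longlongrightarrow> D $ i) (at_right 0)"
      by simp
  qed
  moreover have "eigvals_dir X H = D"
    unfolding eigvals_dir_def using tendsto_Lim[OF trivial_limit_at_right_real lim] .
  ultimately show ?thesis by simp
qed



lemma md_entry: "((W::real^'n^'m) ** diag_mat e) $ i $ k = W $ i $ k * e $ k"
proof -
  have "(W ** diag_mat e) $ i $ k = (\<Sum>j\<in>UNIV. W $ i $ j * (if j = k then e $ j else 0))"
    unfolding matrix_matrix_mult_def diag_mat_def by simp
  also have "\<dots> = (\<Sum>j\<in>UNIV. if j = k then W $ i $ j * e $ j else 0)" by (rule sum.cong) auto
  also have "\<dots> = W $ i $ k * e $ k" by (simp add: sum.delta')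
  finally show ?thesis .
qed

lemma conj_entry: "((W::real^'n^'n) ** diag_mat e ** transpose W) $ i $ j = (\<Sum>k\<in>UNIV. W $ i $ k * e $ k * W $ j $ k)"
  by (simp add: matrix_matrix_mult_def[of "W ** diag_mat e"] md_entry transpose_def)

lemma conj_diff: "(W::real^'n^'n) ** diag_mat a ** transpose W - W ** diag_mat b ** transpose W = W ** diag_mat (a - b) ** transpose W"
  by (simp add: vec_eq_iff conj_entry sum_subtractf[symmetric] algebra_simps)

lemma orth_entry: "orthogonal_matrix (W::real^'n^'n) \<Longrightarrow> \<bar>W $ i $ k\<bar> \<le> 1"
proof -
  assume o: "orthogonal_matrix W"
  have "(W $ i $ k)^2 \<le> (\<Sum>j\<in>UNIV. (W $ i $ j)^2)" by (rule member_le_sum) auto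
  hence "(W $ i $ k)^2 \<le> 1" using orth_rows[OF o] by simp
  thus ?thesis by (simp add: abs_square_le_1)
qed

lemma mat_norm_l1: "norm (M::real^'n^'m) \<le> (\<Sum>i\<in>UNIV. \<Sum>j\<in>UNIV. \<bar>M $ i $ j\<bar>)"
proof -
  have "norm M \<le> (\<Sum>i\<in>UNIV. norm (M $ i))" unfolding norm_vec_def by (rule L2_set_le_sum) simp
  also have "\<dots> \<le> (\<Sum>i\<in>UNIV. \<Sum>j\<in>UNIV. \<bar>M $ i $ j\<bar>)" by (rule sum_mono) (rule norm_le_l1_cart)
  finally show ?thesis .
qed

lemma conj_norm:
  assumes o: "orthogonal_matrix (W::real^'n^'n)"
  shows "norm (W ** diag_mat e ** transpose W) \<le> real CARD('n) * real CARD('n) * real CARD('n) * norm e"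
proof -
  have ent: "\<bar>(W ** diag_mat e ** transpose W) $ i $ j\<bar> \<le> real CARD('n) * norm e" for i j
  proof -
    have "\<bar>(W ** diag_mat e ** transpose W) $ i $ j\<bar> \<le> (\<Sum>k\<in>UNIV. \<bar>W $ i $ k * e $ k * W $ j $ k\<bar>)"
      unfolding conj_entry by (rule sum_abs)
    also have "\<dots> \<le> (\<Sum>k\<in>(UNIV::'n set). norm e)"
    proof (rule sum_mono)
      fix k
      have "\<bar>W $ i $ k * e $ k * W $ j $ k\<bar> = \<bar>W $ i $ k\<bar> * \<bar>e $ k\<bar> * \<bar>W $ j $ k\<bar>" by (simp add: abs_mult)
      also have "\<dots> \<le> 1 * norm e * 1"
        by (intro mult_mono orth_entry[OF o] component_le_norm_cart) auto
      finally show "\<bar>W $ i $ k * e $ k * W $ j $ k\<bar> \<le> norm e" by simp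
    qed
    finally show ?thesis by simp
  qed
  have "norm (W ** diag_mat e ** transpose W) \<le> (\<Sum>i\<in>UNIV. \<Sum>j\<in>UNIV. \<bar>(W ** diag_mat e ** transpose W) $ i $ j\<bar>)"
    by (rule mat_norm_l1)
  also have "\<dots> \<le> (\<Sum>i\<in>(UNIV::'n set). \<Sum>j\<in>(UNIV::'n set). real CARD('n) * norm e)"
    by (intro sum_mono ent)
  also have "\<dots> = real CARD('n) * real CARD('n) * real CARD('n) * norm e" by simp
  finally show ?thesis .
qed

lemma diag_axis: "diag_mat v *v axis i 1 = v $ i *\<^sub>R axis i (1::real)"
  by (simp add: vec_eq_iff diag_mv axis_def)

lemma diag_sort:
  fixes v :: "(real, 'n::{finite,linorder}) vec"
  shows "\<exists>p. p permutes (UNIV::'n set) \<and> eigvals (diag_mat v) = (\<chi> j. v $ p j) \<and> nonincr_vec (eigvals (diag_mat v))"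
proof -
  obtain p where p: "p permutes (UNIV::'n set)" "\<forall>i j. i \<le> j \<longrightarrow> v $ p j \<le> v $ p i"
    using sort_perm[of "\<lambda>i. v $ i"] by blast
  have ev: "\<forall>i. diag_mat v *v axis i 1 = v $ i *\<^sub>R axis i (1::real)" by (simp add: diag_axis)
  have on: "\<forall>i j. axis i (1::real) \<bullet> axis j 1 = (if i = j then 1 else 0)" by (simp add: inner_axis_axis)
  have nv: "nonincr_vec (\<chi> j. v $ p j)" unfolding nonincr_vec_def using p(2) by simp
  obtain U where "orthogonal_matrix U" "diag_mat v = U ** diag_mat (\<chi> j. v $ p j) ** transpose U"
    using eig_decomp[OF ev on p(1)] by blast
  hence "eigvals (diag_mat v) = (\<chi> j. v $ p j)" using eigvals_eq nv by blast
  thus ?thesis using p(1) nv by auto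
qed

lemma eigvals_diag: "nonincr_vec (l::(real,'n::{finite,linorder}) vec) \<Longrightarrow> eigvals (diag_mat l) = l"
  by (rule eigvals_eq[of "mat 1"]) (simp_all add: transpose_mat orthogonal_matrix_id)

lemma transpose_diag: "transpose (diag_mat e) = diag_mat e"
  by (simp add: vec_eq_iff transpose_def diag_mat_def)

lemma sym_conj: "transpose ((W::real^'n^'n) ** diag_mat e ** transpose W) = W ** diag_mat e ** transpose W"
  by (simp add: matrix_transpose_mul transpose_diag matrix_mul_assoc)

lemma sym_quot: "transpose A = A \<Longrightarrow> transpose B = B \<Longrightarrow> transpose (c *\<^sub>R (A - B)) = c *\<^sub>R (A - (B::real^'n^'n))"
  by (simp add: transpose_def vec_eq_iff)



lemma vec_norm_bound:
  assumes "\<And>i. \<bar>(v::real^'n) $ i\<bar> \<le> c"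
  shows "norm v \<le> real CARD('n) * c"
proof -
  have "norm v \<le> (\<Sum>i\<in>UNIV. \<bar>v $ i\<bar>)" by (rule norm_le_l1_cart)
  also have "\<dots> \<le> (\<Sum>i\<in>(UNIV::'n set). c)" by (rule sum_mono) (rule assms)
  finally show ?thesis by simp
qed

lemma est1:
  fixes X H w :: "((real,'n::{finite,linorder}) vec,'n) vec"
  assumes sX: "transpose X = X" and sH: "transpose H = H" and sw: "transpose w = w" and t: "0 < t"
  shows "norm ((1/t) *\<^sub>R (eigvals (X + t *\<^sub>R w) - x) - (1/t) *\<^sub>R (eigvals (X + t *\<^sub>R H) - x))
    \<le> real CARD('n) * (2 * real CARD('n) * real CARD('n) * norm (w - H))"
proof -
  have e: "(1/t) *\<^sub>R (eigvals (X + t *\<^sub>R w) - x) - (1/t) *\<^sub>R (eigvals (X + t *\<^sub>R H) - x)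
      = (1/t) *\<^sub>R (eigvals (X + t *\<^sub>R w) - eigvals (X + t *\<^sub>R H))"
    by (simp add: algebra_simps)
  have n: "norm ((X + t *\<^sub>R w) - (X + t *\<^sub>R H)) = t * norm (w - H)"
  proof -
    have "(X + t *\<^sub>R w) - (X + t *\<^sub>R H) = t *\<^sub>R (w - H)" by (simp add: algebra_simps)
    thus ?thesis using t by simp
  qed
  show ?thesis unfolding e
  proof (rule vec_norm_bound)
    fix i
    have "\<bar>eigvals (X + t *\<^sub>R w) $ i - eigvals (X + t *\<^sub>R H) $ i\<bar>
       \<le> 2 * real CARD('n) * real CARD('n) * (t * norm (w - H))"
      using eig_lip[OF sym_add[OF sX sw, of t] sym_add[OF sX sH, of t], where i=i] n by simp
    hence "(1/t) * \<bar>eigvals (X + t *\<^sub>R w) $ i - eigvals (X + t *\<^sub>R H) $ i\<bar>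
       \<le> (1/t) * (2 * real CARD('n) * real CARD('n) * (t * norm (w - H)))"
      using t by (intro mult_left_mono) simp_all
    also have "\<dots> = 2 * real CARD('n) * real CARD('n) * norm (w - H)" using t by simp
    finally show "\<bar>((1/t) *\<^sub>R (eigvals (X + t *\<^sub>R w) - eigvals (X + t *\<^sub>R H))) $ i\<bar>
       \<le> 2 * real CARD('n) * real CARD('n) * norm (w - H)"
      using t by (simp add: abs_mult)
  qed
qed

lemma diag_diff: "diag_mat a - diag_mat b = diag_mat (a - b)"
  by (simp add: vec_eq_iff diag_mat_def)

lemma diag_norm: "norm (diag_mat (e::real^'n)) \<le> real CARD('n) * real CARD('n) * real CARD('n) * norm e"
  using conj_norm[OF orthogonal_matrix_id, of e] by (simp add: transpose_mat)

lemma est2: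
  fixes X H Wt :: "((real,'n::{finite,linorder}) vec,'n) vec"
  assumes sX: "transpose X = X" and sH: "transpose H = H" and t: "0 < t"
    and oW: "orthogonal_matrix Wt"
    and Wt: "X + t *\<^sub>R H = Wt ** diag_mat (eigvals (X + t *\<^sub>R H)) ** transpose Wt"
  shows "norm ((1/t) *\<^sub>R (Wt ** diag_mat (eigvals (diag_mat (x + t *\<^sub>R w))) ** transpose Wt - X) - H)
    \<le> (real CARD('n) * real CARD('n) * real CARD('n)) *
       (real CARD('n) * (2 * real CARD('n) * real CARD('n)) * (real CARD('n) * real CARD('n) * real CARD('n)))
       * norm (w - (1/t) *\<^sub>R (eigvals (X + t *\<^sub>R H) - x))"
proof -
  define C3 where "C3 = real CARD('n) * real CARD('n) * real CARD('n)"
  define C2 where "C2 = 2 * real CARD('n) * real CARD('n)"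
  define ez where "ez = eigvals (X + t *\<^sub>R H)"
  define v where "v = x + t *\<^sub>R w"
  define sv where "sv = eigvals (diag_mat v)"
  have nz: "nonincr_vec ez" unfolding ez_def using eigvals_rep[OF sym_add[OF sX sH]] by blast
  have ezd: "eigvals (diag_mat ez) = ez" by (rule eigvals_diag[OF nz])
  have "(1/t) *\<^sub>R (Wt ** diag_mat sv ** transpose Wt - X) - H
      = (1/t) *\<^sub>R (Wt ** diag_mat sv ** transpose Wt - (X + t *\<^sub>R H))"
    using t by (simp add: algebra_simps)
  also have "\<dots> = (1/t) *\<^sub>R (Wt ** diag_mat (sv - ez) ** transpose Wt)"
    by (subst Wt) (simp add: ez_def conj_diff)
  finally have e1: "(1/t) *\<^sub>R (Wt ** diag_mat sv ** transpose Wt - X) - H = (1/t) *\<^sub>R (Wt ** diag_mat (sv - ez) ** transpose Wt)" .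
  have b1: "norm (Wt ** diag_mat (sv - ez) ** transpose Wt) \<le> C3 * norm (sv - ez)"
    unfolding C3_def by (rule conj_norm[OF oW])
  have b2: "norm (sv - ez) \<le> real CARD('n) * (C2 * (C3 * norm (v - ez)))"
  proof (rule vec_norm_bound)
    fix i
    have "\<bar>(sv - ez) $ i\<bar> = \<bar>eigvals (diag_mat v) $ i - eigvals (diag_mat ez) $ i\<bar>"
      unfolding sv_def ezd by simp
    also have "\<dots> \<le> C2 * norm (diag_mat v - diag_mat ez)"
      unfolding C2_def by (rule eig_lip[OF transpose_diag transpose_diag])
    also have "\<dots> \<le> C2 * (C3 * norm (v - ez))"
      unfolding diag_diff C3_def by (rule mult_left_mono[OF diag_norm]) (simp add: C2_def)
    finally show "\<bar>(sv - ez) $ i\<bar> \<le> C2 * (C3 * norm (v - ez))" .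
  qed
  have ve: "v - ez = t *\<^sub>R (w - (1/t) *\<^sub>R (ez - x))"
    unfolding v_def using t by (simp add: algebra_simps)
  have "norm ((1/t) *\<^sub>R (Wt ** diag_mat sv ** transpose Wt - X) - H)
      = (1/t) * norm (Wt ** diag_mat (sv - ez) ** transpose Wt)" unfolding e1 using t by simp
  also have "\<dots> \<le> (1/t) * (C3 * (real CARD('n) * (C2 * (C3 * norm (v - ez)))))"
    using b1 b2 t by (intro mult_left_mono) (auto intro: order_trans mult_left_mono simp: C3_def)
  also have "\<dots> = C3 * (real CARD('n) * C2 * C3) * norm (w - (1/t) *\<^sub>R (ez - x))"
    unfolding ve using t by simp
  finally show ?thesis unfolding C3_def C2_def sv_def v_def ez_def .
qed



theorem theorem3p5:
  fixes \<theta> :: "(real, 'n::{finite,linorder}) vec \<Rightarrow> ereal"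
    and X H :: "((real, 'n) vec, 'n) vec"
  assumes "symmetric_fun \<theta>"
    and "X \<in> sym_mats"
    and "\<bar>\<theta> (eigvals X)\<bar> \<noteq> \<infinity>"
    and "(lsc_efun \<theta> \<and> convex_efun \<theta> \<and> subdiff \<theta> (eigvals X) \<noteq> {})
         \<or> loc_lipschitz_rel_dom \<theta> (eigvals X)"
    and "H \<in> sym_mats"
  shows "subderiv (\<lambda>Y. \<theta> (eigvals Y)) sym_mats X H
         = subderiv \<theta> UNIV (eigvals X) (eigvals_dir X H)"
proof -
  have sX: "transpose X = X" using assms(2) unfolding sym_mats_def by simp
  have sH: "transpose H = H" using assms(5) unfolding sym_mats_def by simp
  define x where "x = eigvals X"
  define d where "d = eigvals_dir X H"
  define q where "q t = (1 / t) *\<^sub>R (eigvals (X + t *\<^sub>R H) - x)" for t :: real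
  have qlim: "(q \<longlongrightarrow> d) (at_right 0)"
    unfolding q_def x_def d_def by (rule eigvals_dir_lim[OF sX sH])
  define S where "S = (sym_mats :: ((real,'n) vec,'n) vec set)"
  define F1 where "F1 = at_right (0::real) \<times>\<^sub>F inf (nhds H) (principal S)"
  define F2 where "F2 = at_right (0::real) \<times>\<^sub>F nhds d"
  define \<phi>1 where "\<phi>1 = (\<lambda>(t::real, w'). (\<theta> (eigvals (X + t *\<^sub>R w')) - \<theta> x) / ereal t)"
  define \<phi>2 where "\<phi>2 = (\<lambda>(t::real, w'). (\<theta> (x + t *\<^sub>R w') - \<theta> x) / ereal t)"
  have L: "subderiv (\<lambda>Y. \<theta> (eigvals Y)) sym_mats X H = Liminf F1 \<phi>1"
    unfolding subderiv_def F1_def \<phi>1_def S_def x_def ..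
  have R: "subderiv \<theta> UNIV (eigvals X) (eigvals_dir X H) = Liminf F2 \<phi>2"
    unfolding subderiv_def F2_def \<phi>2_def d_def x_def by simp
  have evF1: "eventually (\<lambda>y. 0 < fst y \<and> snd y \<in> S) F1"
    unfolding F1_def eventually_prod_filter
    by (intro exI[of _ "\<lambda>t. 0 < t"] exI[of _ "\<lambda>w. w \<in> S"])
       (auto simp: eventually_at_right_less eventually_inf_principal)
  have evF2: "eventually (\<lambda>y. 0 < fst y) F2"
    unfolding F2_def eventually_prod_filter
    by (intro exI[of _ "\<lambda>t. 0 < t"] exI[of _ "\<lambda>w. True"])
       (auto simp: eventually_at_right_less)

  define g where "g y = (1 / fst y) *\<^sub>R (eigvals (X + fst y *\<^sub>R snd y) - x)" for y :: "real \<times> ((real,'n) vec,'n) vec"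
  have glim: "(g \<longlongrightarrow> d) F1"
  proof -
    have q1: "((\<lambda>y. q (fst y)) \<longlongrightarrow> d) F1" unfolding F1_def by (rule filterlim_compose[OF qlim filterlim_fst])
    have "filterlim snd (inf (nhds H) (principal S)) F1" unfolding F1_def by (rule filterlim_snd)
    hence sn: "(snd \<longlongrightarrow> H) F1" by (simp add: filterlim_inf)
    define K where "K = real CARD('n) * (2 * real CARD('n) * real CARD('n))"
    have "((\<lambda>y. g y - q (fst y)) \<longlongrightarrow> 0) F1"
    proof (rule Lim_null_comparison)
      show "eventually (\<lambda>y. norm (g y - q (fst y)) \<le> K * norm (snd y - H)) F1"
        using evF1
      proof eventually_elim
        case (elim y)
        obtain t w where y: "y = (t, w)" by (cases y)
        have t: "0 < t" and sw: "transpose w = w" using elim unfolding y S_def sym_mats_def by auto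
        show ?case unfolding y g_def q_def K_def fst_conv snd_conv
          using est1[OF sX sH sw t, of x] by (simp add: mult.assoc)
      qed
      have "((\<lambda>y. snd y - H) \<longlongrightarrow> 0) F1" by (rule LIM_zero[OF sn])
      hence "((\<lambda>y. norm (snd y - H)) \<longlongrightarrow> 0) F1" by (rule tendsto_norm_zero)
      thus "((\<lambda>y. K * norm (snd y - H)) \<longlongrightarrow> 0) F1" by (rule tendsto_mult_right_zero)
    qed
    hence "((\<lambda>y. (g y - q (fst y)) + q (fst y)) \<longlongrightarrow> 0 + d) F1" by (rule tendsto_add[OF _ q1])
    thus ?thesis by simp
  qed
  have fl1: "filterlim (\<lambda>y. (fst y, g y)) F2 F1"
    unfolding F2_def by (rule filterlim_Pair) (use glim in \<open>simp_all add: F1_def filterlim_fst\<close>)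
  have e1: "eventually (\<lambda>y. \<phi>2 (fst y, g y) = \<phi>1 y) F1"
    using evF1
  proof eventually_elim
    case (elim y)
    obtain t w where y: "y = (t, w)" by (cases y)
    have t: "0 < t" using elim unfolding y by auto
    have "x + t *\<^sub>R ((1 / t) *\<^sub>R (eigvals (X + t *\<^sub>R w) - x)) = eigvals (X + t *\<^sub>R w)"
      using t by simp
    thus ?case unfolding y g_def \<phi>1_def \<phi>2_def by simp
  qed
  have dir1: "Liminf F2 \<phi>2 \<le> Liminf F1 \<phi>1"
  proof -
    have "Liminf F2 \<phi>2 \<le> Liminf F1 (\<lambda>y. \<phi>2 (fst y, g y))" by (rule Liminf_comp_le[OF fl1])
    also have "\<dots> = Liminf F1 \<phi>1" by (rule Liminf_eq[OF e1])
    finally show ?thesis .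
  qed

  define WZ where "WZ t = (SOME W. orthogonal_matrix W \<and>
      X + t *\<^sub>R H = W ** diag_mat (eigvals (X + t *\<^sub>R H)) ** transpose W)" for t :: real
  have WZ: "orthogonal_matrix (WZ t) \<and> X + t *\<^sub>R H = WZ t ** diag_mat (eigvals (X + t *\<^sub>R H)) ** transpose (WZ t)" for t
  proof -
    have "\<exists>W. orthogonal_matrix W \<and> X + t *\<^sub>R H = W ** diag_mat (eigvals (X + t *\<^sub>R H)) ** transpose W"
      using eigvals_rep[OF sym_add[OF sX sH, of t]] by blast
    thus ?thesis unfolding WZ_def by (rule someI_ex)
  qed
  define Y where "Y y = WZ (fst y) ** diag_mat (eigvals (diag_mat (x + fst y *\<^sub>R snd y))) ** transpose (WZ (fst y))"
    for y :: "real \<times> (real,'n) vec"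
  define G where "G y = (1 / fst y) *\<^sub>R (Y y - X)" for y
  have thY: "\<theta> (eigvals (Y y)) = \<theta> (x + fst y *\<^sub>R snd y)" for y
  proof -
    obtain p where p: "p permutes (UNIV::'n set)"
      "eigvals (diag_mat (x + fst y *\<^sub>R snd y)) = (\<chi> j. (x + fst y *\<^sub>R snd y) $ p j)"
      "nonincr_vec (eigvals (diag_mat (x + fst y *\<^sub>R snd y)))"
      using diag_sort by blast
    have "eigvals (Y y) = eigvals (diag_mat (x + fst y *\<^sub>R snd y))"
      unfolding Y_def by (rule eigvals_eq[OF conjunct1[OF WZ] p(3)]) simp
    also have "\<dots> = (\<chi> j. (x + fst y *\<^sub>R snd y) $ p j)" by (rule p(2))
    finally have ey: "eigvals (Y y) = (\<chi> j. (x + fst y *\<^sub>R snd y) $ p j)" .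
    have "\<theta> (\<chi> j. (x + fst y *\<^sub>R snd y) $ p j) = \<theta> (x + fst y *\<^sub>R snd y)"
      using assms(1) p(1) unfolding symmetric_fun_def by blast
    thus ?thesis unfolding ey .
  qed
  have e2: "eventually (\<lambda>y. \<phi>1 (fst y, G y) = \<phi>2 y) F2"
    using evF2
  proof eventually_elim
    case (elim y)
    obtain t w where y: "y = (t, w)" by (cases y)
    have t: "0 < t" using elim unfolding y by auto
    have "X + t *\<^sub>R ((1 / t) *\<^sub>R (Y y - X)) = Y y" using t by simp
    thus ?case using thY[of y] unfolding y G_def \<phi>1_def \<phi>2_def by simp
  qed
  have Glim: "(G \<longlongrightarrow> H) F2"
  proof -
    have q2: "((\<lambda>y. q (fst y)) \<longlongrightarrow> d) F2" unfolding F2_def by (rule filterlim_compose[OF qlim filterlim_fst])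
    have sn: "(snd \<longlongrightarrow> d) F2" unfolding F2_def by (rule filterlim_snd)
    define K where "K = (real CARD('n) * real CARD('n) * real CARD('n)) *
       (real CARD('n) * (2 * real CARD('n) * real CARD('n)) * (real CARD('n) * real CARD('n) * real CARD('n)))"
    have "((\<lambda>y. G y - H) \<longlongrightarrow> 0) F2"
    proof (rule Lim_null_comparison)
      show "eventually (\<lambda>y. norm (G y - H) \<le> K * norm (snd y - q (fst y))) F2"
        using evF2
      proof eventually_elim
        case (elim y)
        obtain t w where y: "y = (t, w)" by (cases y)
        have t: "0 < t" using elim unfolding y by auto
        show ?case unfolding y G_def Y_def q_def K_def fst_conv snd_conv
          by (rule est2[OF sX sH t conjunct1[OF WZ] conjunct2[OF WZ]])
      qed
      have "((\<lambda>y. snd y - q (fst y)) \<longlongrightarrow> d - d) F2" by (rule tendsto_diff[OF sn q2])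
      hence "((\<lambda>y. snd y - q (fst y)) \<longlongrightarrow> 0) F2" by simp
      hence "((\<lambda>y. norm (snd y - q (fst y))) \<longlongrightarrow> 0) F2" by (rule tendsto_norm_zero)
      thus "((\<lambda>y. K * norm (snd y - q (fst y))) \<longlongrightarrow> 0) F2" by (rule tendsto_mult_right_zero)
    qed
    thus ?thesis by (rule LIM_zero_cancel)
  qed
  have GS: "eventually (\<lambda>y. G y \<in> S) F2"
    by (rule always_eventually) (simp add: G_def Y_def S_def sym_mats_def sym_quot[OF sym_conj sX])
  have fl2: "filterlim (\<lambda>y. (fst y, G y)) F1 F2"
    unfolding F1_def
  proof (rule filterlim_Pair)
    show "filterlim fst (at_right 0) F2" unfolding F2_def by (rule filterlim_fst)
    show "filterlim G (inf (nhds H) (principal S)) F2"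
      unfolding filterlim_inf filterlim_principal using Glim GS by simp
  qed
  have dir2: "Liminf F1 \<phi>1 \<le> Liminf F2 \<phi>2"
  proof -
    have "Liminf F1 \<phi>1 \<le> Liminf F2 (\<lambda>y. \<phi>1 (fst y, G y))" by (rule Liminf_comp_le[OF fl2])
    also have "\<dots> = Liminf F2 \<phi>2" by (rule Liminf_eq[OF e2])
    finally show ?thesis .
  qed
  show ?thesis unfolding L R using dir1 dir2 by (rule antisym[rotated])
qed


end
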